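(* Let $x\in\mathbb{R}^n$. If $G_i^-(x)=G_i^+(x)$ for any $i\in I$, then $G_{\min}^+(x)=G_{\min}^-(x)$. If the equidistant sets belonging to the focal sets $K$ and $L_i$ are equidistant functions for any $i\in I$, then so is the equidistant set belonging to the focal sets $K$ and $L$.
   Context: For sets $A,B\subset\mathbb{R}^{n+1}$ and a point $p$, $d(p,A)=\inf\{|p-a| : a\in A\}$, and the equidistant set is $\{A=B\}=\{p : d(p,A)=d(p,B)\}$. Let $I$ be a finite, nonempty index set and $\{f_i\mid i\in I\}$ a family of positive-valued, continuous functions on $\mathbb{R}^n$, with epigraphs $L_i=\{(x,y)\mid f_i(x)\le y\}\subset\mathbb{R}^n\times\mathbb{R}$. Let $K\subset\mathbb{R}^{n+1}$ be a nonempty, closed set containing a point $(x_*,y_* )$ with $y_*\le 0$ (i.e. $K$ extends into the closed negative half-space), and with $K\cap L_i=\emptyset$ for all $i\in I$. Let $f_{\min}(x)=\min\{f_i(x)\mid i\in I\}$; its epigraph is $L=\bigcup_{i\in I}L_i$, and $K\cap L=\emptyset$. For focal sets $K$ and a (disjoint) epigraph $M$, the upper/lower equidistant functions are $G^+(x)=\sup\{y : d((x,y),K)=d((x,y),M)\}$ and $G^-(x)=\inf\{y : d((x,y),K)=d((x,y),M)\}$; when the equidistant point on each vertical line is unique, the equidistant set is the graph of the equidistant function $G$ defined by $d((x,G(x)),K)=d((x,G(x)),M)$. Here $G_i^\pm$ are the upper/lower equidistant functions for $K$ and $L_i$, and $G_{\min}^\pm$ those for $K$ and $L$. It has been shown that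 $\min_i G_i^-(x)\le G_{\min}^-(x)\le G_{\min}^+(x)\le\min_i G_i^+(x)$ for all $x$. *)

theory Defs
  imports "HOL-Analysis.Analysis"
begin

text \<open>Points of R^(n+1) are pairs (x,y) with x in R^n (type real^'n) and y real;
  the product metric on pairs is the Euclidean one.  Distance to a set is infdist.\<close>

definition equidistant_set :: "('a::metric_space) set \<Rightarrow> 'a set \<Rightarrow> 'a set" where
  "equidistant_set A B = {p. infdist p A = infdist p B}"

definition upper_equidistant_fun ::
  "(('a::metric_space) \<times> real) set \<Rightarrow> ('a \<times> real) set \<Rightarrow> 'a \<Rightarrow> ereal" where
  "upper_equidistant_fun K M x = Sup {ereal y | y. (x, y) \<in> equidistant_set K M}"

definition lower_equidistant_fun ::
  "(('a::metric_space) \<times> real) set \<Rightarrow> ('a \<times> real) set \<Rightarrow> 'a \<Rightarrow> ereal" where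
  "lower_equidistant_fun K M x = Inf {ereal y | y. (x, y) \<in> equidistant_set K M}"

definition is_equidistant_function ::
  "(('a::metric_space) \<times> real) set \<Rightarrow> ('a \<times> real) set \<Rightarrow> bool" where
  "is_equidistant_function K M \<longleftrightarrow> (\<forall>x. \<exists>!y. (x, y) \<in> equidistant_set K M)"

end

theory Submission
  imports Defs
begin

lemma sign_lemma:
  fixes \<phi> :: "real \<Rightarrow> real"
  assumes cont: "continuous_on UNIV \<phi>" and zero: "\<And>y. \<phi> y = 0 \<longleftrightarrow> y = g"
    and pos: "\<And>y. y \<ge> b \<Longrightarrow> \<phi> y > 0" and neg: "\<phi> a < 0"
  shows "\<And>y. y > g \<Longrightarrow> \<phi> y > 0" and "\<And>y. y < g \<Longrightarrow> \<phi> y < 0"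
proof -
  have c: "\<And>u v. continuous_on {u..v} \<phi>" using cont continuous_on_subset by blast
  show P: "\<phi> y > 0" if "y > g" for y
  proof (rule ccontr)
    assume "\<not> \<phi> y > 0"
    then have "\<phi> y \<le> 0" by simp
    moreover have "\<phi> (max y b) > 0" using pos by simp
    ultimately obtain z where "y \<le> z" "z \<le> max y b" "\<phi> z = 0"
      using IVT'[of \<phi> y 0 "max y b", OF _ _ _ c] by force
    then show False using zero that by auto
  qed
  show "\<phi> y < 0" if "y < g" for y
  proof (rule ccontr)
    assume "\<not> \<phi> y < 0"
    then have y0: "\<phi> y \<ge> 0" by simp
    have "a \<noteq> g" using zero neg by force
    moreover have "\<not> a > g" using P neg by force
    ultimately have ag: "a < g" by simp
    show False
    proof (cases "y \<le> a")
      case True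
      then obtain z where "y \<le> z" "z \<le> a" "\<phi> z = 0"
        using IVT2'[of \<phi> a 0 y, OF _ _ _ c] y0 neg by force
      then show False using zero ag by auto
    next
      case False
      then obtain z where "a \<le> z" "z \<le> y" "\<phi> z = 0"
        using IVT'[of \<phi> a 0 y, OF _ _ _ c] y0 neg by force
      then show False using zero that by auto
    qed
  qed
qed

lemma infdist_UN_finite:
  assumes "finite I" "I \<noteq> {}" "\<forall>i\<in>I. A i \<noteq> {}"
  shows "\<exists>j\<in>I. infdist p (\<Union>i\<in>I. A i) = infdist p (A j)"
  using assms
proof (induction I rule: finite_ne_induct)
  case (singleton x)
  then show ?case by simp
next
  case (insert i F)
  then obtain j where j: "j \<in> F" "infdist p (\<Union>i\<in>F. A i) = infdist p (A j)" by auto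
  have "(\<Union>i\<in>insert i F. A i) = A i \<union> (\<Union>i\<in>F. A i)" by auto
  moreover have "(\<Union>i\<in>F. A i) \<noteq> {}" using insert j by auto
  ultimately have "infdist p (\<Union>i\<in>insert i F. A i) = min (infdist p (A i)) (infdist p (A j))"
    using infdist_Un_min[of "A i" "\<Union>i\<in>F. A i" p] insert.prems j by auto
  then show ?case using j by (auto simp: min_def)
qed

lemma infdist_UN_le:
  assumes "i \<in> I" "A i \<noteq> {}"
  shows "infdist p (\<Union>i\<in>I. A i) \<le> infdist p (A i)"
  using assms by (intro infdist_mono) auto

lemma neg_point:
  fixes f :: "real^'n \<Rightarrow> real" and K :: "((real^'n) \<times> real) set"
  assumes fpos: "\<forall>x. f x > 0" and fc: "continuous_on UNIV f"
    and K: "(xs, ys) \<in> K" "ys \<le> 0"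
  shows "\<exists>y. infdist (x, y) K < infdist (x, y) (epigraph UNIV f)"
proof -
  define a where "a = dist x xs"
  define R where "R = a + 1"
  have "a \<ge> 0" by (simp add: a_def)
  obtain z where z: "z \<in> cball x R" "\<forall>w\<in>cball x R. f z \<le> f w"
    using continuous_attains_inf[of "cball x R" f] fc \<open>a \<ge> 0\<close> R_def
    by (metis compact_cball continuous_on_subset cball_eq_empty not_le subset_UNIV add_nonneg_pos zero_less_one less_le_not_le)
  define c where "c = f z"
  have c0: "c > 0" using fpos c_def by simp
  define y where "y = min ys (-(a\<^sup>2/c) - 1)"
  have "a\<^sup>2/c \<ge> 0" using c0 by simp
  then have y0: "y < 0" "y \<le> ys" using K unfolding y_def by auto
  have ay: "- y \<ge> a\<^sup>2 / c + 1" unfolding y_def by auto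
  define s where "s = sqrt (a\<^sup>2 + y\<^sup>2)"
  have dK: "infdist (x, y) K \<le> s"
  proof -
    have "infdist (x, y) K \<le> dist (x, y) (xs, ys)" using K infdist_le by blast
    also have "\<dots> = sqrt (a\<^sup>2 + (y - ys)\<^sup>2)" by (simp add: dist_Pair_Pair a_def dist_real_def)
    also have "\<dots> \<le> s"
    proof -
      have "(ys - y)\<^sup>2 \<le> (-y)\<^sup>2" using y0 K by (intro power_mono) auto
      then have "(y - ys)\<^sup>2 \<le> y\<^sup>2" by (simp add: power2_commute)
      then show ?thesis by (simp add: s_def)
    qed
    finally show ?thesis .
  qed
  define r where "r = min (sqrt (R\<^sup>2 + y\<^sup>2)) (c - y)"
  have sr: "s < r"
  proof -
    have "a\<^sup>2 < R\<^sup>2" unfolding R_def using \<open>a \<ge> 0\<close> by (intro power_strict_mono) auto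
    then have "s < sqrt (R\<^sup>2 + y\<^sup>2)" unfolding s_def by simp
    moreover have "s < c - y"
    proof -
      have "c * (a\<^sup>2 / c + 1) \<le> c * (-y)" using ay c0 by (intro mult_left_mono) auto
      then have h1: "a\<^sup>2 + c \<le> c * (-y)" using c0 by (simp add: algebra_simps)
      have h2: "(c - y)\<^sup>2 = c\<^sup>2 + 2 * (c * (-y)) + y\<^sup>2" by (simp add: power2_eq_square algebra_simps)
      have "c\<^sup>2 > 0" using c0 by simp
      then have "a\<^sup>2 + y\<^sup>2 < (c - y)\<^sup>2" using h1 h2 c0 zero_le_power2[of a] by linarith
      then have "sqrt (a\<^sup>2 + y\<^sup>2) < sqrt ((c - y)\<^sup>2)" by (rule real_sqrt_less_mono)
      moreover have "sqrt ((c - y)\<^sup>2) = c - y" using c0 y0 by simp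
      ultimately show ?thesis unfolding s_def by simp
    qed
    ultimately show ?thesis unfolding r_def by simp
  qed
  have dL: "r \<le> infdist (x, y) (epigraph UNIV f)"
  proof -
    have ne: "epigraph UNIV f \<noteq> {}" by (auto simp: epigraph_def)
    have "r \<le> dist (x, y) q" if q: "q \<in> epigraph UNIV f" for q
    proof -
      obtain x' y' where qq: "q = (x', y')" by force
      have fy: "f x' \<le> y'" using q qq by (auto simp: epigraph_def)
      have yy: "y' - y \<ge> - y" using fpos[rule_format, of x'] fy by linarith
      have dq: "dist (x, y) q = sqrt ((dist x x')\<^sup>2 + (y' - y)\<^sup>2)"
        by (simp add: qq dist_Pair_Pair dist_real_def power2_commute)
      show ?thesis
      proof (cases "dist x x' \<le> R")
        case True
        then have "f x' \<ge> c" using z c_def by auto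
        then have "c - y \<le> y' - y" using fy by simp
        also have "\<dots> \<le> dist (x, y) q" unfolding dq by (simp add: real_le_rsqrt)
        finally show ?thesis unfolding r_def by simp
      next
        case False
        have e1: "R\<^sup>2 \<le> (dist x x')\<^sup>2"
          using False \<open>a \<ge> 0\<close> unfolding R_def by (intro power_mono) auto
        have "(-y)\<^sup>2 \<le> (y' - y)\<^sup>2"
          using yy y0 by (intro power_mono) auto
        then have "R\<^sup>2 + y\<^sup>2 \<le> (dist x x')\<^sup>2 + (y' - y)\<^sup>2" using e1 by simp
        then have "sqrt (R\<^sup>2 + y\<^sup>2) \<le> dist (x, y) q" unfolding dq by simp
        then show ?thesis unfolding r_def by simp
      qed
    qed
    then show ?thesis using ne by (simp add: infdist_notempty cINF_greatest)
  qed
  show ?thesis using dK sr dL by (intro exI[of _ y]) simp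
qed

lemma core:
  fixes I :: "'i set" and f :: "'i \<Rightarrow> (real^'n) \<Rightarrow> real" and K :: "((real^'n) \<times> real) set"
  assumes fin: "finite I" and Ine: "I \<noteq> {}"
    and fpos: "\<forall>i\<in>I. \<forall>x. f i x > 0"
    and fc: "\<forall>i\<in>I. continuous_on UNIV (f i)"
    and Kc: "closed K" and Kne: "K \<noteq> {}"
    and K: "(xs, ys) \<in> K" "ys \<le> 0"
    and disj: "\<forall>i\<in>I. K \<inter> epigraph UNIV (f i) = {}"
    and sing: "\<forall>i\<in>I. {y. (x, y) \<in> equidistant_set K (epigraph UNIV (f i))} = {g i}"
  shows "{y. (x, y) \<in> equidistant_set K (epigraph UNIV (\<lambda>x. Min ((\<lambda>i. f i x) ` I)))} = {Min (g ` I)}"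
proof -
  define L where "L i = epigraph UNIV (f i)" for i
  have Leq: "epigraph UNIV (\<lambda>x. Min ((\<lambda>i. f i x) ` I)) = (\<Union>i\<in>I. L i)"
    using fin Ine by (auto simp: epigraph_def L_def Min_le_iff)
  have Lne: "L i \<noteq> {}" for i
    unfolding L_def epigraph_def by auto
  define \<phi> where "\<phi> i y = infdist (x, y) K - infdist (x, y) (L i)" for i y
  have sgn: "(\<forall>y>g i. \<phi> i y > 0) \<and> (\<forall>y<g i. \<phi> i y < 0) \<and> \<phi> i (g i) = 0" if i: "i \<in> I" for i
  proof -
    have cont: "continuous_on UNIV (\<phi> i)"
      unfolding \<phi>_def by (intro continuous_intros)
    have zero: "\<phi> i y = 0 \<longleftrightarrow> y = g i" for y
      using sing i unfolding \<phi>_def L_def equidistant_set_def by (auto simp: set_eq_iff)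
    have pos: "\<phi> i y > 0" if "y \<ge> f i x" for y
    proof -
      have "(x, y) \<in> L i" using that by (simp add: L_def epigraph_def)
      moreover then have "(x, y) \<notin> K" using disj i L_def by auto
      ultimately show ?thesis unfolding \<phi>_def
        using infdist_pos_not_in_closed[OF Kc Kne] by simp
    qed
    obtain a where "infdist (x, a) K < infdist (x, a) (L i)"
      using neg_point[of "f i" xs ys K x] fpos fc i K unfolding L_def by blast
    then have neg: "\<phi> i a < 0" unfolding \<phi>_def by simp
    show ?thesis using sign_lemma[OF cont zero pos neg] zero by blast
  qed
  define g0 where "g0 = Min (g ` I)"
  have "g0 \<in> g ` I" unfolding g0_def using fin Ine by (intro Min_in) auto
  then obtain i0 where i0: "i0 \<in> I" "g i0 = g0" by auto
  have g0le: "g0 \<le> g i" if "i \<in> I" for i using fin that g0_def by simp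
  have "infdist (x, y) K = infdist (x, y) (\<Union>i\<in>I. L i) \<longleftrightarrow> y = g0" for y
  proof -
    obtain j where j: "j \<in> I" "infdist (x, y) (\<Union>i\<in>I. L i) = infdist (x, y) (L j)"
      using infdist_UN_finite[OF fin Ine] Lne by blast
    have le: "infdist (x, y) (\<Union>i\<in>I. L i) \<le> infdist (x, y) (L i0)"
      using infdist_UN_le[OF i0(1)] Lne by blast
    consider "y > g0" | "y < g0" | "y = g0" by linarith
    then show ?thesis
    proof cases
      case 1
      then have "\<phi> i0 y > 0" using sgn[OF i0(1)] i0 by auto
      then show ?thesis using le 1 unfolding \<phi>_def by auto
    next
      case 2
      then have "\<phi> j y < 0" using sgn[OF j(1)] g0le[OF j(1)] by auto
      then show ?thesis using j 2 unfolding \<phi>_def by auto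
    next
      case 3
      have a: "\<phi> i0 y = 0" using sgn[OF i0(1)] i0 3 by auto
      have "\<phi> j y \<le> 0"
      proof (cases "g0 = g j")
        case True then show ?thesis using sgn[OF j(1)] 3 by simp
      next
        case False then have yl: "y < g j" using g0le[OF j(1)] 3 by simp
        have "\<forall>y<g j. \<phi> j y < 0" using sgn[OF j(1)] by blast
        then have "\<phi> j y < 0" using yl by blast
        then show ?thesis by simp
      qed
      then show ?thesis using a le j 3 unfolding \<phi>_def by auto
    qed
  qed
  then show ?thesis unfolding Leq g0_def equidistant_set_def by auto
qed

lemma inf_sup_singleton:
  assumes "Inf {ereal y | y. P y} = Sup {ereal y | y. P y}"
  shows "\<exists>g. {y. P y} = {g}"
proof (cases "\<exists>y. P y")
  case False
  then have "{ereal y | y. P y} = {}" by auto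
  then show ?thesis using assms by (simp add: top_ereal_def bot_ereal_def)
next
  case True
  then obtain y1 where y1: "P y1" by auto
  have "y2 = y1" if "P y2" for y2
  proof (rule ccontr)
    assume ne: "y2 \<noteq> y1"
    have "Inf {ereal y | y. P y} \<le> ereal (min y1 y2)"
      using y1 that by (intro Inf_lower) (auto simp: min_def)
    moreover have "ereal (max y1 y2) \<le> Sup {ereal y | y. P y}"
      using y1 that by (intro Sup_upper) (auto simp: max_def)
    moreover have "min y1 y2 < max y1 y2" using ne by (auto simp: min_def max_def)
    ultimately show False using assms by auto
  qed
  then show ?thesis using y1 by auto
qed

lemma singleton_ereal:
  assumes "{y. P y} = {g}"
  shows "Inf {ereal y | y. P y} = ereal g" "Sup {ereal y | y. P y} = ereal g"
proof -
  have "{ereal y | y. P y} = {ereal g}" using assms by (auto simp: set_eq_iff)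
  then show "Inf {ereal y | y. P y} = ereal g" "Sup {ereal y | y. P y} = ereal g" by simp_all
qed

theorem corollary7:
  fixes I :: "'i set" and f :: "'i \<Rightarrow> (real^'n) \<Rightarrow> real" and K :: "((real^'n) \<times> real) set"
  assumes "finite I" and "I \<noteq> {}"
    and "\<forall>i\<in>I. \<forall>x. f i x > 0"
    and "\<forall>i\<in>I. continuous_on UNIV (f i)"
    and "closed K" and "K \<noteq> {}"
    and "\<exists>x y. (x, y) \<in> K \<and> y \<le> 0"
    and "\<forall>i\<in>I. K \<inter> epigraph UNIV (f i) = {}"
  shows "(\<forall>x. (\<forall>i\<in>I. lower_equidistant_fun K (epigraph UNIV (f i)) x
                      = upper_equidistant_fun K (epigraph UNIV (f i)) x)
              \<longrightarrow> upper_equidistant_fun K (epigraph UNIV (\<lambda>x. Min ((\<lambda>i. f i x) ` I))) x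
                  = lower_equidistant_fun K (epigraph UNIV (\<lambda>x. Min ((\<lambda>i. f i x) ` I))) x)
       \<and> ((\<forall>i\<in>I. is_equidistant_function K (epigraph UNIV (f i)))
              \<longrightarrow> is_equidistant_function K (epigraph UNIV (\<lambda>x. Min ((\<lambda>i. f i x) ` I))))"
proof -
  obtain xs ys where K: "(xs, ys) \<in> K" "ys \<le> 0" using assms(7) by blast
  note C = core[OF assms(1-6) K assms(8)]
  have P1: "upper_equidistant_fun K (epigraph UNIV (\<lambda>x. Min ((\<lambda>i. f i x) ` I))) x
                  = lower_equidistant_fun K (epigraph UNIV (\<lambda>x. Min ((\<lambda>i. f i x) ` I))) x"
    if h: "\<forall>i\<in>I. lower_equidistant_fun K (epigraph UNIV (f i)) x
                      = upper_equidistant_fun K (epigraph UNIV (f i)) x" for x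
  proof -
    have "\<forall>i\<in>I. \<exists>g. {y. (x, y) \<in> equidistant_set K (epigraph UNIV (f i))} = {g}"
    proof
      fix i assume "i \<in> I"
      then show "\<exists>g. {y. (x, y) \<in> equidistant_set K (epigraph UNIV (f i))} = {g}"
        using h by (intro inf_sup_singleton) (simp add: lower_equidistant_fun_def upper_equidistant_fun_def)
    qed
    then obtain g where "\<forall>i\<in>I. {y. (x, y) \<in> equidistant_set K (epigraph UNIV (f i))} = {g i}"
      by metis
    note E = C[OF this]
    show ?thesis
      unfolding lower_equidistant_fun_def upper_equidistant_fun_def
      by (simp only: singleton_ereal[OF E])
  qed
  have eu: "(\<exists>!y. P y) \<longleftrightarrow> (\<exists>g. {y. P y} = {g})" for P :: "real \<Rightarrow> bool"
    by (auto simp: set_eq_iff)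
  have P2: "is_equidistant_function K (epigraph UNIV (\<lambda>x. Min ((\<lambda>i. f i x) ` I)))"
    if h: "\<forall>i\<in>I. is_equidistant_function K (epigraph UNIV (f i))"
  proof -
    have "\<exists>g. {y. (x, y) \<in> equidistant_set K (epigraph UNIV (\<lambda>x. Min ((\<lambda>i. f i x) ` I)))} = {g}" for x
    proof -
      have "\<forall>i\<in>I. \<exists>g. {y. (x, y) \<in> equidistant_set K (epigraph UNIV (f i))} = {g}"
        using h unfolding is_equidistant_function_def eu by blast
      then obtain g where "\<forall>i\<in>I. {y. (x, y) \<in> equidistant_set K (epigraph UNIV (f i))} = {g i}"
        by metis
      from C[OF this] show ?thesis by blast
    qed
    then show ?thesis unfolding is_equidistant_function_def eu by blast
  qed
  show ?thesis using P1 P2 by blast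
qed

end
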